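(* Let $V$ be a finite set of voters and let $O_1,O_2,\dots,O_k$ be a sequence of delegation operations with pairwise distinct times $t_1<t_2<\dots<t_k$, where each $O_i$ is a pair $(v_i,d_i)$ with $v_i\in V$ and $d_i\in V\cup\{\bot\}$ ($d_i=\bot$ meaning undelegation). For a time $t$, the state graph $G_t$ is the directed graph on $V$ containing, for each voter $v$ having at least one operation at time $<t$, the edge $v\to d$ where $(v,d)$ is the latest such operation, if $d\neq\bot$. The final graph $G$ is $G_{\infty}$; each edge of $G$ carries the time of the operation that produced it. Apply the following deletion procedure to $G$: while $G$ contains a directed cycle, choose a directed cycle and delete its edge with the latest time. Suppose $O_i=(v_i,d_i)$ with $d_i\neq\bot$ is the last operation of voter $v_i$ (so $v_i\to d_i$ is an edge of $G$), and suppose that the graph $G_{t_i}$ together with the edge $v_i\to d_i$ contains no directed cycle through $v_i\to d_i$. Then the edge $v_i\to d_i$ is never deleted by the deletion procedure.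
   Context: Each voter appoints at most one delegate at any time, so every state graph has out-degree at most one at every vertex. The hypothesis on $O_i$ expresses that the voter's delegation, checked against the current delegate graph at the moment it was submitted, did not create a cycle. *)

theory Defs
  imports Main "HOL-Library.Extended_Real"
begin

text \<open>Operations: list of pairs (voter, delegate option); None = undelegation.
  Operation j happens at time t j (t strictly increasing on the indices).\<close>

type_synonym 'v op = "'v \<times> 'v option"

definition state_graph :: "'v op list \<Rightarrow> (nat \<Rightarrow> real) \<Rightarrow> ereal \<Rightarrow> 'v rel" where
  "state_graph ops t tau = {(v, d). \<exists>j < length ops. ereal (t j) < tau \<and> ops ! j = (v, Some d) \<and>
      (\<forall>j' < length ops. ereal (t j') < tau \<and> fst (ops ! j') = v \<longrightarrow> t j' \<le> t j)}"

definition final_graph :: "'v op list \<Rightarrow> (nat \<Rightarrow> real) \<Rightarrow> 'v rel" where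
  "final_graph ops t = state_graph ops t \<infinity>"

definition edge_time :: "'v op list \<Rightarrow> (nat \<Rightarrow> real) \<Rightarrow> 'v \<times> 'v \<Rightarrow> real" where
  "edge_time ops t e = t (GREATEST j. j < length ops \<and> fst (ops ! j) = fst e)"

definition cycle_edges :: "'v list \<Rightarrow> 'v rel" where
  "cycle_edges xs = {(xs ! j, xs ! (Suc j mod length xs)) | j. j < length xs}"

definition is_cycle :: "'v rel \<Rightarrow> 'v list \<Rightarrow> bool" where
  "is_cycle E xs \<longleftrightarrow> xs \<noteq> [] \<and> distinct xs \<and> cycle_edges xs \<subseteq> E"

definition del_step :: "('v \<times> 'v \<Rightarrow> real) \<Rightarrow> 'v rel \<Rightarrow> 'v rel \<Rightarrow> bool" where
  "del_step tm E E' \<longleftrightarrow> (\<exists>xs e. is_cycle E xs \<and> e \<in> cycle_edges xs \<and>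
      (\<forall>e' \<in> cycle_edges xs. tm e' \<le> tm e) \<and> E' = E - {e})"

end

theory Submission
  imports Defs
begin

lemma fg_wit:
  assumes mono: "\<forall>j j'. j < j' \<and> j' < length ops \<longrightarrow> t j < t j'"
    and "(u, x) \<in> final_graph ops t"
  shows "\<exists>j0<length ops. ops ! j0 = (u, Some x) \<and> (\<forall>j'<length ops. fst (ops ! j') = u \<longrightarrow> j' \<le> j0)"
proof -
  from assms(2) obtain j0 where j0: "j0 < length ops" "ops ! j0 = (u, Some x)"
    "\<forall>j'<length ops. fst (ops ! j') = u \<longrightarrow> t j' \<le> t j0"
    unfolding final_graph_def state_graph_def by auto
  have "\<forall>j'<length ops. fst (ops ! j') = u \<longrightarrow> j' \<le> j0"
  proof (intro allI impI)
    fix j' assume "j' < length ops" "fst (ops ! j') = u"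
    with j0 have "t j' \<le> t j0" by auto
    then show "j' \<le> j0" using mono \<open>j' < length ops\<close> by (meson leI not_le)
  qed
  with j0 show ?thesis by blast
qed

lemma greatest_eq:
  assumes "j0 < length ops" "fst (ops ! j0) = u" "\<forall>j'<length ops. fst (ops ! j') = u \<longrightarrow> j' \<le> j0"
  shows "(GREATEST j. j < length ops \<and> fst (ops ! j) = u) = j0"
  using assms by (intro Greatest_equality) auto

theorem mainTheorem2:
  fixes V :: "'v set" and ops :: "'v op list" and t :: "nat \<Rightarrow> real"
    and i :: nat and v d :: 'v and E :: "'v rel"
  assumes "finite V"
    and "\<forall>(u, x) \<in> set ops. u \<in> V \<and> (\<forall>y. x = Some y \<longrightarrow> y \<in> V)"
    and "\<forall>j j'. j < j' \<and> j' < length ops \<longrightarrow> t j < t j'"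
    and "i < length ops" and "ops ! i = (v, Some d)"
    and "\<forall>j. i < j \<and> j < length ops \<longrightarrow> fst (ops ! j) \<noteq> v"
    and "\<not> (\<exists>xs. is_cycle (state_graph ops t (ereal (t i)) \<union> {(v, d)}) xs
                  \<and> (v, d) \<in> cycle_edges xs)"
    and "(del_step (edge_time ops t))\<^sup>*\<^sup>* (final_graph ops t) E"
  shows "(v, d) \<in> E"
proof -
  let ?F = "final_graph ops t"
  let ?S = "state_graph ops t (ereal (t i))"
  let ?tm = "edge_time ops t"
  have iall: "\<forall>j'<length ops. fst (ops ! j') = v \<longrightarrow> j' \<le> i"
    using assms(6) by (metis leI)
  have tmv: "?tm (v, d) = t i"
    unfolding edge_time_def using greatest_eq[OF assms(4) _ iall] assms(5) by simp
  have key: "e' \<in> ?S \<union> {(v, d)}" if "e' \<in> ?F" "?tm e' \<le> t i" for e'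
  proof -
    obtain u x where e': "e' = (u, x)" by fastforce
    from fg_wit[OF assms(3)] that(1) e' obtain j0 where j0: "j0 < length ops"
      "ops ! j0 = (u, Some x)" "\<forall>j'<length ops. fst (ops ! j') = u \<longrightarrow> j' \<le> j0" by blast
    show ?thesis
    proof (cases "u = v")
      case True
      then have "i \<le> j0" using j0 assms(4,5) by auto
      moreover have "j0 \<le> i" using iall j0 True by auto
      ultimately show ?thesis using j0 assms(5) e' True by simp
    next
      case False
      have "?tm e' = t j0" unfolding edge_time_def using greatest_eq[OF j0(1) _ j0(3)] j0(2) e' by simp
      with that(2) have "t j0 \<le> t i" by simp
      moreover have "j0 \<noteq> i" using False j0(2) assms(5) by auto
      ultimately have "j0 < i" using assms(3) j0(1) by (metis leD linorder_neqE_nat)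
      then have lt: "t j0 < t i" using assms(3,4) by blast
      have "\<forall>j'<length ops. ereal (t j') < ereal (t i) \<and> fst (ops ! j') = u \<longrightarrow> t j' \<le> t j0"
      proof (intro allI impI)
        fix j' assume a: "j' < length ops" "ereal (t j') < ereal (t i) \<and> fst (ops ! j') = u"
        then have "j' \<le> j0" using j0(3) by auto
        then show "t j' \<le> t j0" using assms(3) j0(1) by (metis le_less order.strict_implies_order)
      qed
      then have "e' \<in> ?S" unfolding state_graph_def using j0(1,2) lt e' by auto
      then show ?thesis by simp
    qed
  qed
  have "(v, d) \<in> E \<and> E \<subseteq> ?F"
    using assms(8)
  proof (induction rule: rtranclp_induct)
    case base
    have "(v, d) \<in> ?F" unfolding final_graph_def state_graph_def
      using assms(4,5) iall assms(3) by (auto intro!: exI[of _ i]) (metis le_less)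
    then show ?case by simp
  next
    case (step E1 E2)
    from step.hyps(2) obtain xs e where c: "is_cycle E1 xs" "e \<in> cycle_edges xs"
      "\<forall>e' \<in> cycle_edges xs. ?tm e' \<le> ?tm e" "E2 = E1 - {e}"
      unfolding del_step_def by blast
    have "e \<noteq> (v, d)"
    proof
      assume ed: "e = (v, d)"
      have "cycle_edges xs \<subseteq> ?S \<union> {(v, d)}"
      proof
        fix e' assume "e' \<in> cycle_edges xs"
        moreover have "e' \<in> ?F" using c(1) step.IH \<open>e' \<in> cycle_edges xs\<close> unfolding is_cycle_def by blast
        ultimately show "e' \<in> ?S \<union> {(v, d)}" using key c(3) ed tmv by auto
      qed
      then have "is_cycle (?S \<union> {(v, d)}) xs" using c(1) unfolding is_cycle_def by auto
      then show False using assms(7) c(2) ed by blast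
    qed
    then show ?case using step.IH c(4) by auto
  qed
  then show ?thesis by simp
qed

end
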